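(* Let $l\ge 2$ and let $\Gamma$ be the $l$-lattice. Then the spectrum of its (signless) normalized Laplacian is given by: $0$, with multiplicity $l^2-2l+1$; $\frac{l}{2}$, with multiplicity $2(l-1)$; and $l$, with multiplicity $1$.
   Context: A hypergraph $\Gamma=(\mathcal{V},\mathcal{H})$ has a finite vertex set $\mathcal{V}$ and a set $\mathcal{H}$ of nonempty subsets of $\mathcal{V}$ (hyperedges). $\deg(v)$ is the number of hyperedges containing $v$, $D$ the diagonal degree matrix, $A$ the matrix with $A_{ii}=0$ and $A_{ij}=-\#\{h\in\mathcal{H}: v_i,v_j\in h\}$ for $i\ne j$, and the (signless) normalized Laplacian is $L=\mathrm{Id}-D^{-1}A$. For $l\in\mathbb{N}_{\ge 2}$, the $l$-lattice is the hypergraph with vertex set $\{v_{ab}: a,b\in\{1,\ldots,l\}\}$ ($l^2$ vertices arranged in an $l\times l$ grid) and $2l$ hyperedges, namely the rows $\{v_{a1},\ldots,v_{al}\}$ for $a=1,\ldots,l$ and the columns $\{v_{1b},\ldots,v_{lb}\}$ for $b=1,\ldots,l$. *)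

theory Defs
  imports "Jordan_Normal_Form.Char_Poly"
begin

text \<open>A hypergraph on the vertex set {0..<n} (vertex v_i is the index i) with a
  set H of nonempty hyperedges.\<close>

definition hdeg :: "nat set set \<Rightarrow> nat \<Rightarrow> nat" where
  "hdeg H i = card {h \<in> H. i \<in> h}"

definition hadj :: "nat set set \<Rightarrow> nat \<Rightarrow> nat \<Rightarrow> real" where
  "hadj H i j = (if i = j then 0 else - real (card {h \<in> H. i \<in> h \<and> j \<in> h}))"

definition norm_laplacian :: "nat \<Rightarrow> nat set set \<Rightarrow> real mat" where
  "norm_laplacian n H =
     one_mat n - (mat n n (\<lambda>(i,j). if i = j then 1 / real (hdeg H i) else 0)
                  * mat n n (\<lambda>(i,j). hadj H i j))"

text \<open>The l-lattice: vertex v_ab (a,b in 1..l) is encoded as index (a-1)*l+(b-1).\<close>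
definition lattice_edges :: "nat \<Rightarrow> nat set set" where
  "lattice_edges l =
     (\<lambda>a. {a * l + b | b. b < l}) ` {..<l} \<union> (\<lambda>b. {a * l + b | a. a < l}) ` {..<l}"

end

theory Submission
  imports Defs
begin

lemma sum_split_nat:
  fixes f :: "nat \<Rightarrow> 'b::comm_monoid_add"
  shows "(\<Sum>i<m*l. f i) = (\<Sum>a<m. \<Sum>b<l. f (a*l+b))"
proof (induction m)
  case 0 then show ?case by simp
next
  case (Suc m)
  have "{..<Suc m * l} = {..<m*l} \<union> {m*l..<m*l+l}" by auto
  then have "(\<Sum>i<Suc m*l. f i) = (\<Sum>i<m*l. f i) + (\<Sum>i\<in>{m*l..<m*l+l}. f i)"
    by (simp add: sum.union_disjoint ivl_disj_int)
  also have "(\<Sum>i\<in>{m*l..<m*l+l}. f i) = (\<Sum>b<l. f (m*l+b))"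
    using sum.shift_bounds_nat_ivl[of f 0 "m*l" l] by (simp add: lessThan_atLeast0 add.commute)
  finally show ?case using Suc by simp
qed

lemma prod_split_nat:
  fixes f :: "nat \<Rightarrow> 'b::comm_monoid_mult"
  shows "(\<Prod>i<m*l. f i) = (\<Prod>a<m. \<Prod>b<l. f (a*l+b))"
proof (induction m)
  case 0 then show ?case by simp
next
  case (Suc m)
  have "{..<Suc m * l} = {..<m*l} \<union> {m*l..<m*l+l}" by auto
  then have "(\<Prod>i<Suc m*l. f i) = (\<Prod>i<m*l. f i) * (\<Prod>i\<in>{m*l..<m*l+l}. f i)"
    by (simp add: prod.union_disjoint ivl_disj_int)
  also have "(\<Prod>i\<in>{m*l..<m*l+l}. f i) = (\<Prod>b<l. f (m*l+b))"
    using prod.shift_bounds_nat_ivl[of f 0 "m*l" l] by (simp add: lessThan_atLeast0 add.commute)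
  finally show ?case using Suc by simp
qed

definition tens :: "nat \<Rightarrow> real \<Rightarrow> (nat \<Rightarrow> nat \<Rightarrow> real) \<Rightarrow> (nat \<Rightarrow> nat \<Rightarrow> real) \<Rightarrow> real mat" where
  "tens l c g h = mat (l*l) (l*l) (\<lambda>(i,j). c * g (i div l) (j div l) * h (i mod l) (j mod l))"

definition comp :: "nat \<Rightarrow> (nat \<Rightarrow> nat \<Rightarrow> real) \<Rightarrow> (nat \<Rightarrow> nat \<Rightarrow> real) \<Rightarrow> nat \<Rightarrow> nat \<Rightarrow> real" where
  "comp l g h x z = (\<Sum>y<l. g x y * h y z)"

lemma tens_carrier[simp]: "tens l c g h \<in> carrier_mat (l*l) (l*l)"
  by (simp add: tens_def)

lemma tens_mult:
  "tens l c1 g1 h1 * tens l c2 g2 h2 = tens l (c1*c2) (comp l g1 g2) (comp l h1 h2)"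
proof (rule eq_matI)
  fix i j assume i: "i < dim_row (tens l (c1*c2) (comp l g1 g2) (comp l h1 h2))"
    and j: "j < dim_col (tens l (c1*c2) (comp l g1 g2) (comp l h1 h2))"
  then have i': "i < l*l" and j': "j < l*l" by (auto simp: tens_def)
  have lp: "l > 0" using i' by (cases l) auto
  have "(tens l c1 g1 h1 * tens l c2 g2 h2) $$ (i,j)
     = (\<Sum>k<l*l. (c1 * g1 (i div l) (k div l) * h1 (i mod l) (k mod l)) *
                  (c2 * g2 (k div l) (j div l) * h2 (k mod l) (j mod l)))"
    using i' j' by (simp add: tens_def scalar_prod_def lessThan_atLeast0)
  also have "\<dots> = (\<Sum>a<l. \<Sum>b<l. (c1 * g1 (i div l) a * h1 (i mod l) b) *
                  (c2 * g2 a (j div l) * h2 b (j mod l)))"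
    using lp by (simp add: sum_split_nat)
  also have "\<dots> = c1*c2 * (\<Sum>a<l. g1 (i div l) a * g2 a (j div l)) * (\<Sum>b<l. h1 (i mod l) b * h2 b (j mod l))"
    by (simp add: sum_distrib_left sum_distrib_right mult_ac)
  also have "\<dots> = tens l (c1*c2) (comp l g1 g2) (comp l h1 h2) $$ (i,j)"
    using i' j' by (simp add: tens_def comp_def)
  finally show "(tens l c1 g1 h1 * tens l c2 g2 h2) $$ (i,j) = tens l (c1*c2) (comp l g1 g2) (comp l h1 h2) $$ (i,j)" .
qed (auto simp: tens_def)

lemma tens_cong:
  assumes "\<And>x z. x < l \<Longrightarrow> z < l \<Longrightarrow> g x z = g' x z"
    and "\<And>x z. x < l \<Longrightarrow> z < l \<Longrightarrow> h x z = h' x z"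
  shows "tens l c g h = tens l c g' h'"
proof -
  have "\<And>i. i < l*l \<Longrightarrow> i div l < l"
    by (simp add: less_mult_imp_div_less)
  moreover have "\<And>i. i < l*l \<Longrightarrow> i mod l < l"
    by (metis mod_less_divisor mult_0_right neq0_conv not_less0)
  ultimately show ?thesis unfolding tens_def using assms
    by (intro eq_matI) auto
qed

definition "dl (x::nat) (z::nat) = (if x = z then 1 else 0 :: real)"
definition "on (x::nat) (z::nat) = (1::real)"
definition "pp (x::nat) (z::nat) = (if x = z then 1 else if z = 0 then 1 else 0 :: real)"
definition "qq (x::nat) (z::nat) = (if x = z then 1 else if z = 0 then -1 else 0 :: real)"
definition "BB l (x::nat) (z::nat) = (if x = 0 then (if z = 0 then real l else 1) else 0 :: real)"

lemma comp_dl_right: "y < l \<Longrightarrow> comp l g dl x y = g x y"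
  by (simp add: comp_def dl_def if_distrib[of "\<lambda>t. t * _"] if_distrib[of "\<lambda>t. _ * t"] sum.delta sum.delta' cong: if_cong)

lemma comp_dl_left: "x < l \<Longrightarrow> comp l dl g x y = g x y"
  by (simp add: comp_def dl_def if_distrib[of "\<lambda>t. t * _"] if_distrib[of "\<lambda>t. _ * t"] sum.delta sum.delta' cong: if_cong)

lemma qp: assumes "x < l" "z < l" shows "comp l qq pp x z = dl x z"
proof -
  have l0: "0 < l" using assms by auto
  have "comp l qq pp x z = (\<Sum>y<l. (if y = x then 1 else 0) * pp y z + (if y = 0 \<and> x \<noteq> 0 then -1 else 0) * pp y z)"
    unfolding comp_def qq_def by (intro sum.cong) auto
  also have "\<dots> = pp x z + (if x \<noteq> 0 then - pp 0 z else 0)"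
    using assms l0 by (simp add: sum.distrib if_distrib[of "\<lambda>t. t * _"] sum.If_cases)
  also have "\<dots> = dl x z" by (auto simp: pp_def dl_def)
  finally show ?thesis .
qed

lemma pq: assumes "x < l" "z < l" shows "comp l pp qq x z = dl x z"
proof -
  have l0: "0 < l" using assms by auto
  have "comp l pp qq x z = (\<Sum>y<l. (if y = x then 1 else 0) * qq y z + (if y = 0 \<and> x \<noteq> 0 then 1 else 0) * qq y z)"
    unfolding comp_def pp_def by (intro sum.cong) auto
  also have "\<dots> = qq x z + (if x \<noteq> 0 then qq 0 z else 0)"
    using assms l0 by (simp add: sum.distrib if_distrib[of "\<lambda>t. t * _"] sum.If_cases)
  also have "\<dots> = dl x z" by (auto simp: qq_def dl_def)
  finally show ?thesis .
qed

lemma qdp: assumes "x < l" "z < l" shows "comp l (comp l qq dl) pp x z = dl x z"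
proof -
  have "comp l (comp l qq dl) pp x z = comp l qq pp x z"
    unfolding comp_def[of l "comp l qq dl"] by (simp add: comp_dl_right comp_def[of l qq pp])
  then show ?thesis using qp assms by simp
qed

lemma colsum: assumes "z < l" shows "(\<Sum>y<l. pp y z) = (if z = 0 then real l else 1)"
proof -
  have "(\<Sum>y<l. pp y z) = (\<Sum>y<l. (if y = z then 1 else 0) + (if z = 0 \<and> y \<noteq> 0 then 1 else 0))"
    unfolding pp_def by (intro sum.cong) auto
  also have "\<dots> = 1 + (if z = 0 then real (l - 1) else 0)"
  proof -
    have "{..<l} \<inter> Collect ((<) 0) = {..<l} - {0}" by auto
    then have "card ({..<l} \<inter> Collect ((<) (0::nat))) = l - 1" using assms by simp
    then show ?thesis using assms by (simp add: sum.distrib sum.If_cases)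
  qed
  also have "\<dots> = (if z = 0 then real l else 1)" using assms by (auto simp: of_nat_diff)
  finally show ?thesis .
qed

lemma rowsum: assumes "x < l" shows "(\<Sum>y<l. qq x y) = (if x = 0 then 1 else 0)"
proof -
  have l0: "0 < l" using assms by auto
  have "(\<Sum>y<l. qq x y) = (\<Sum>y<l. (if y = x then 1 else 0) + (if y = 0 \<and> x \<noteq> 0 then -1 else 0))"
    unfolding qq_def by (intro sum.cong) auto
  also have "\<dots> = (if x = 0 then 1 else 0)" using assms l0 by (simp add: sum.distrib sum.If_cases)
  finally show ?thesis .
qed

lemma qop: assumes "x < l" "z < l" shows "comp l (comp l qq on) pp x z = BB l x z"
proof -
  have "comp l (comp l qq on) pp x z = (\<Sum>y<l. (\<Sum>w<l. qq x w) * pp y z)"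
    unfolding comp_def on_def by simp
  also have "\<dots> = (\<Sum>w<l. qq x w) * (\<Sum>y<l. pp y z)" by (simp add: sum_distrib_left)
  also have "\<dots> = BB l x z" using assms by (simp add: rowsum colsum BB_def)
  finally show ?thesis .
qed

abbreviation "Rw l a \<equiv> {a * l + b | b. b < l}"
abbreviation "Cl l b \<equiv> {a * l + b | a. a < l}"

lemma memR: "0 < (l::nat) \<Longrightarrow> i \<in> Rw l a \<longleftrightarrow> i div l = a"
proof
  assume "0 < l" "i \<in> Rw l a"
  then obtain b where "i = a*l+b" "b < l" by blast
  then show "i div l = a" by simp
next
  assume "0 < l" "i div l = a" then show "i \<in> Rw l a"
    by (intro CollectI exI[of _ "i mod l"]) (auto simp: mult.commute)
qed

lemma memC: assumes l0: "0 < (l::nat)" and i: "i < l*l" and b: "b < l"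
  shows "i \<in> Cl l b \<longleftrightarrow> i mod l = b"
proof
  assume "i \<in> Cl l b"
  then obtain a where "i = a*l+b" by blast
  then show "i mod l = b" using b by simp
next
  assume a: "i mod l = b"
  have "i div l < l" using i by (simp add: less_mult_imp_div_less)
  moreover have "i = (i div l)*l + b" using a by (metis div_mult_mod_eq)
  ultimately show "i \<in> Cl l b" by blast
qed

lemma RC_ne: fixes l a b :: nat assumes "2 \<le> l" "b < l" shows "Rw l a \<noteq> Cl l b"
proof
  assume eq: "Rw l a = Cl l b"
  have l0: "0 < l" using assms by auto
  have "Suc b mod l < l" using l0 by simp
  then have "a * l + (Suc b mod l) \<in> Rw l a" by (intro CollectI exI[of _ "Suc b mod l"]) simp
  then have "a * l + (Suc b mod l) \<in> Cl l b" using eq by simp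
  then obtain a' where "a * l + (Suc b mod l) = a' * l + b" by blast
  then have "(a * l + (Suc b mod l)) mod l = b" using assms(2) by simp
  then have "Suc b mod l = b" by simp
  then show False
  proof (cases "Suc b < l")
    case True then show False using \<open>Suc b mod l = b\<close> by simp
  next
    case False then have "Suc b = l" using assms(2) by simp
    then show False using \<open>Suc b mod l = b\<close> assms(1) by auto
  qed
qed

lemma mem_edges: "h \<in> lattice_edges l \<longleftrightarrow> (\<exists>c<l. h = Rw l c) \<or> (\<exists>c<l. h = Cl l c)"
  unfolding lattice_edges_def by (simp add: image_iff Bex_def)

lemma inc_set: assumes "0 < l" "i < l*l"
  shows "{h \<in> lattice_edges l. i \<in> h} = {Rw l (i div l), Cl l (i mod l)}"
proof -
  have d: "i div l < l" using assms by (simp add: less_mult_imp_div_less)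
  have m: "i mod l < l" using assms by simp
  show ?thesis
  proof (intro Set.set_eqI iffI)
    fix h assume "h \<in> {h \<in> lattice_edges l. i \<in> h}"
    then obtain c where "c < l" "h = Rw l c \<or> h = Cl l c" "i \<in> h"
      unfolding mem_edges by blast
    then show "h \<in> {Rw l (i div l), Cl l (i mod l)}"
      using memR[OF assms(1), of i c] memC[OF assms \<open>c < l\<close>] by auto
  next
    fix h assume "h \<in> {Rw l (i div l), Cl l (i mod l)}"
    then show "h \<in> {h \<in> lattice_edges l. i \<in> h}"
      using d m memR[OF assms(1), of i "i div l"] memC[OF assms m]
      unfolding lattice_edges_def by auto
  qed
qed

lemma hdeg2: assumes "2 \<le> l" "i < l*l" shows "hdeg (lattice_edges l) i = 2"
proof -
  have l0: "0 < l" using assms by auto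
  have m: "i mod l < l" using l0 by simp
  show ?thesis unfolding hdeg_def inc_set[OF l0 assms(2)] using RC_ne[OF assms(1) m] by simp
qed

lemma filter2: "{h \<in> {A, B}. P h} = (if P A then {A} else {}) \<union> (if P B then {B} else {})"
  by (cases "P A"; cases "P B") auto

lemma card_common: assumes "2 \<le> l" "i < l*l" "j < l*l" "i \<noteq> j"
  shows "real (card {h \<in> lattice_edges l. i \<in> h \<and> j \<in> h})
    = (if i div l = j div l then 1 else 0) + (if i mod l = j mod l then 1 else 0)"
proof -
  have l0: "0 < l" using assms by auto
  have m: "i mod l < l" using l0 by simp
  have ne: "\<not> (i div l = j div l \<and> i mod l = j mod l)"
    using assms(4) by (metis div_mult_mod_eq)
  have jR: "j \<in> Rw l (i div l) \<longleftrightarrow> i div l = j div l" using memR[OF l0, of j "i div l"] by auto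
  have jC: "j \<in> Cl l (i mod l) \<longleftrightarrow> i mod l = j mod l" using memC[OF l0 assms(3) m] by auto
  have RC: "Rw l (i div l) \<noteq> Cl l (i mod l)" using RC_ne[OF assms(1) m] .
  have "{h \<in> lattice_edges l. i \<in> h \<and> j \<in> h} = {h \<in> {h \<in> lattice_edges l. i \<in> h}. j \<in> h}"
    by blast
  also have "\<dots> = {h \<in> {Rw l (i div l), Cl l (i mod l)}. j \<in> h}"
    unfolding inc_set[OF l0 assms(2)] ..
  also have "\<dots> = (if i div l = j div l then {Rw l (i div l)} else {}) \<union> (if i mod l = j mod l then {Cl l (i mod l)} else {})"
    unfolding filter2 jR jC ..
  finally have eq: "{h \<in> lattice_edges l. i \<in> h \<and> j \<in> h} = (if i div l = j div l then {Rw l (i div l)} else {}) \<union> (if i mod l = j mod l then {Cl l (i mod l)} else {})" .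
  show ?thesis unfolding eq using ne RC by (cases "i div l = j div l"; cases "i mod l = j mod l") simp_all
qed

lemma L_eq: assumes "2 \<le> l"
  shows "norm_laplacian (l^2) (lattice_edges l) = tens l (1/2) dl on + tens l (1/2) on dl"
proof (rule eq_matI)
  fix i j assume "i < dim_row (tens l (1/2) dl on + tens l (1/2) on dl)"
     "j < dim_col (tens l (1/2) dl on + tens l (1/2) on dl)"
  then have i: "i < l*l" and j: "j < l*l" by (auto simp: tens_def)
  have l0: "0 < l" using assms by auto
  have "(mat (l*l) (l*l) (\<lambda>(i,j). if i = j then 1 / real (hdeg (lattice_edges l) i) else 0)
        * mat (l*l) (l*l) (\<lambda>(i,j). hadj (lattice_edges l) i j)) $$ (i,j)
     = (\<Sum>k<l*l. (if i = k then 1 / real (hdeg (lattice_edges l) i) else 0) * hadj (lattice_edges l) k j)"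
    using i j by (simp add: scalar_prod_def lessThan_atLeast0)
  also have "\<dots> = hadj (lattice_edges l) i j / 2"
    using i hdeg2[OF assms i] by (simp add: if_distrib[of "\<lambda>t. t * _"] sum.delta cong: if_cong)
  finally have DA: "(mat (l*l) (l*l) (\<lambda>(i,j). if i = j then 1 / real (hdeg (lattice_edges l) i) else 0)
        * mat (l*l) (l*l) (\<lambda>(i,j). hadj (lattice_edges l) i j)) $$ (i,j) = hadj (lattice_edges l) i j / 2" .
  show "norm_laplacian (l^2) (lattice_edges l) $$ (i,j) = (tens l (1/2) dl on + tens l (1/2) on dl) $$ (i,j)"
    unfolding norm_laplacian_def power2_eq_square
    using i j DA card_common[OF assms i j]
    by (auto simp: tens_def dl_def on_def hadj_def)
qed (auto simp: tens_def norm_laplacian_def power2_eq_square)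

lemma tens_one: assumes "0 < l" shows "tens l 1 dl dl = 1\<^sub>m (l*l)"
proof (rule eq_matI)
  fix i j assume "i < dim_row (1\<^sub>m (l*l) :: real mat)" "j < dim_col (1\<^sub>m (l*l) :: real mat)"
  then have i: "i < l*l" and j: "j < l*l" by auto
  have "(i div l = j div l \<and> i mod l = j mod l) \<longleftrightarrow> i = j"
    by (metis div_mult_mod_eq)
  then show "tens l 1 dl dl $$ (i,j) = 1\<^sub>m (l*l) $$ (i,j)"
    using i j by (auto simp: tens_def dl_def)
qed (auto simp: tens_def)

definition "UU l = tens l (1/2) (BB l) dl + tens l (1/2) dl (BB l)"

lemma UU_ut: assumes "0 < l" shows "upper_triangular (UU l)"
  unfolding upper_triangular_def
proof (intro allI impI)
  fix i j assume i: "i < dim_row (UU l)" and ji: "j < i"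
  then have i': "i < l*l" and j': "j < l*l" by (auto simp: UU_def tens_def)
  have z1: "BB l (i div l) (j div l) * dl (i mod l) (j mod l) = 0"
  proof (cases "i div l = 0 \<and> i mod l = j mod l")
    case True
    then have "i = i mod l" by (metis add_0 div_mult_mod_eq mult_0)
    also have "\<dots> = j mod l" using True by simp
    also have "\<dots> \<le> j" by simp
    finally show ?thesis using ji by simp
  next
    case False then show ?thesis by (auto simp: BB_def dl_def)
  qed
  have z2: "dl (i div l) (j div l) * BB l (i mod l) (j mod l) = 0"
  proof (cases "i div l = j div l \<and> i mod l = 0")
    case True
    then have "i = (j div l) * l" by (metis add_0_right div_mult_mod_eq)
    also have "\<dots> \<le> j" by (metis div_mult_mod_eq le_add1)
    finally show ?thesis using ji by simp
  next
    case False then show ?thesis by (auto simp: BB_def dl_def)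
  qed
  have "UU l $$ (i,j) = (1/2) * (BB l (i div l) (j div l) * dl (i mod l) (j mod l)) + (1/2) * (dl (i div l) (j div l) * BB l (i mod l) (j mod l))"
    using i' j' by (simp add: UU_def tens_def)
  then show "UU l $$ (i,j) = 0" unfolding z1 z2 by simp
qed

lemma UU_diag: assumes "i < l*l"
  shows "UU l $$ (i,i) = (if i div l = 0 then real l / 2 else 0) + (if i mod l = 0 then real l / 2 else 0)"
  using assms by (simp add: UU_def tens_def BB_def dl_def)

lemma QLP: assumes "2 \<le> l"
  shows "tens l 1 qq qq * norm_laplacian (l^2) (lattice_edges l) * tens l 1 pp pp = UU l"
proof -
  have l0: "0 < l" using assms by auto
  have c: "tens l c g h \<in> carrier_mat (l*l) (l*l)" for c g h by (rule tens_carrier)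
  have qc: "tens l 1 qq qq * tens l c g h \<in> carrier_mat (l*l) (l*l)" for c g h by (rule mult_carrier_mat; rule tens_carrier)
  have s1: "tens l 1 qq qq * norm_laplacian (l^2) (lattice_edges l) * tens l 1 pp pp
     = tens l 1 qq qq * tens l (1/2) dl on * tens l 1 pp pp + tens l 1 qq qq * tens l (1/2) on dl * tens l 1 pp pp"
    unfolding L_eq[OF assms] mult_add_distrib_mat[OF c c c] add_mult_distrib_mat[OF qc qc c] ..
  have e1: "tens l 1 qq qq * tens l (1/2) dl on * tens l 1 pp pp = tens l (1/2) dl (BB l)"
  proof -
    have "tens l 1 qq qq * tens l (1/2) dl on * tens l 1 pp pp = tens l (1*(1/2)*1) (comp l (comp l qq dl) pp) (comp l (comp l qq on) pp)"
      unfolding tens_mult ..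
    also have "\<dots> = tens l (1/2) dl (BB l)"
      by (simp only: mult_1_left mult_1_right) (rule tens_cong; simp add: qdp qop)
    finally show ?thesis .
  qed
  have e2: "tens l 1 qq qq * tens l (1/2) on dl * tens l 1 pp pp = tens l (1/2) (BB l) dl"
  proof -
    have "tens l 1 qq qq * tens l (1/2) on dl * tens l 1 pp pp = tens l (1*(1/2)*1) (comp l (comp l qq on) pp) (comp l (comp l qq dl) pp)"
      unfolding tens_mult ..
    also have "\<dots> = tens l (1/2) (BB l) dl"
      by (simp only: mult_1_left mult_1_right) (rule tens_cong; simp add: qdp qop)
    finally show ?thesis .
  qed
  have e3: "tens l (1/2) dl (BB l) + tens l (1/2) (BB l) dl = UU l"
    unfolding UU_def by (rule comm_add_mat[OF c c])
  show ?thesis unfolding s1 e1 e2 e3 ..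
qed

lemma prod_final:
  fixes l :: nat assumes "2 \<le> l"
  shows "(\<Prod>i<l*l. [:- ((if i div l = 0 then real l / 2 else 0) + (if i mod l = 0 then real l / 2 else 0)), 1:])
     = [:0, 1:] ^ (l^2 - 2*l + 1) * [:- (real l / 2), 1:] ^ (2 * (l - 1)) * [:- real l, 1:]"
proof -
  define A :: "real poly" where "A = [:- (real l / 2), 1:]"
  define Z :: "real poly" where "Z = [:0, 1:]"
  define F :: "nat \<Rightarrow> nat \<Rightarrow> real poly" where "F = (\<lambda>a b. [:- ((if a = 0 then real l / 2 else 0) + (if b = 0 then real l / 2 else 0)), 1:] :: real poly)"
  have l0: "0 < l" using assms by auto
  have s: "{..<l} = insert 0 {1..<l}" using l0 by auto
  have "(\<Prod>i<l*l. [:- ((if i div l = 0 then real l / 2 else 0) + (if i mod l = 0 then real l / 2 else 0)), 1:])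
      = (\<Prod>a<l. \<Prod>b<l. F ((a*l+b) div l) ((a*l+b) mod l))"
    unfolding prod_split_nat F_def ..
  also have "\<dots> = (\<Prod>a<l. \<Prod>b<l. F a b)"
    by (intro prod.cong refl) simp
  also have "\<dots> = (\<Prod>b<l. F 0 b) * (\<Prod>a\<in>{1..<l}. \<Prod>b<l. F a b)"
    unfolding s by (subst prod.insert) auto
  also have "(\<Prod>b<l. F 0 b) = [:- real l, 1:] * A ^ (l - 1)"
  proof -
    have "(\<Prod>b<l. F 0 b) = F 0 0 * (\<Prod>b\<in>{1..<l}. F 0 b)"
      unfolding s by (subst prod.insert) auto
    also have "(\<Prod>b\<in>{1..<l}. F 0 b) = (\<Prod>b\<in>{1..<l}. A)"
      by (intro prod.cong refl) (auto simp: F_def A_def)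
    finally show ?thesis by (simp add: F_def)
  qed
  also have "(\<Prod>a\<in>{1..<l}. \<Prod>b<l. F a b) = (\<Prod>a\<in>{1..<l}. A * Z ^ (l - 1))"
  proof (intro prod.cong refl)
    fix a assume a: "a \<in> {1..<l}"
    have "(\<Prod>b<l. F a b) = F a 0 * (\<Prod>b\<in>{1..<l}. F a b)"
      unfolding s by (subst prod.insert) auto
    also have "(\<Prod>b\<in>{1..<l}. F a b) = (\<Prod>b\<in>{1..<l}. Z)"
      using a by (intro prod.cong refl) (auto simp: F_def Z_def)
    finally show "(\<Prod>b<l. F a b) = A * Z ^ (l - 1)" using a by (simp add: F_def A_def)
  qed
  also have "\<dots> = (A * Z ^ (l - 1)) ^ (l - 1)" by simp
  finally have eq: "(\<Prod>i<l*l. [:- ((if i div l = 0 then real l / 2 else 0) + (if i mod l = 0 then real l / 2 else 0)), 1:])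
     = [:- real l, 1:] * A ^ (l - 1) * (A * Z ^ (l - 1)) ^ (l - 1)" .
  obtain k where k: "l = Suc k" using l0 by (cases l) auto
  have kk: "1 \<le> k * k" using assms k by simp
  have e1: "l^2 - 2*l + 1 = k * k" using kk unfolding k by (simp add: power2_eq_square algebra_simps)
  have e2: "2 * (l - 1) = k + k" unfolding k by simp
  have e3: "l - 1 = k" using k by simp
  define C :: "real poly" where "C = [:- real l, 1:]"
  show ?thesis unfolding eq e1 e2 e3 A_def[symmetric] Z_def[symmetric] C_def[symmetric]
    by (simp add: power_mult_distrib power_mult[symmetric] power_add mult_ac mult_2_right)
qed

theorem mainTheorem9:
  fixes l :: nat
  assumes "l \<ge> 2"
  shows "char_poly (norm_laplacian (l^2) (lattice_edges l)) =
           [:0, 1:] ^ (l^2 - 2*l + 1)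
         * [:- (real l / 2), 1:] ^ (2 * (l - 1))
         * [:- real l, 1:]"
proof -
  have l0: "0 < l" using assms by auto
  define L where "L = norm_laplacian (l^2) (lattice_edges l)"
  define P where "P = tens l 1 pp pp"
  define Q where "Q = tens l 1 qq qq"
  have Lc: "L \<in> carrier_mat (l*l) (l*l)"
    unfolding L_eq[OF assms, folded L_def] by (rule add_carrier_mat; rule tens_carrier)
  have Pc: "P \<in> carrier_mat (l*l) (l*l)" unfolding P_def by (rule tens_carrier)
  have Qc: "Q \<in> carrier_mat (l*l) (l*l)" unfolding Q_def by (rule tens_carrier)
  have Uc: "UU l \<in> carrier_mat (l*l) (l*l)" unfolding UU_def by (rule add_carrier_mat; rule tens_carrier)
  have PQ: "P * Q = 1\<^sub>m (l*l)"
  proof -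
    have "P * Q = tens l (1*1) (comp l pp qq) (comp l pp qq)" unfolding P_def Q_def tens_mult ..
    also have "\<dots> = tens l 1 dl dl" by (simp only: mult_1_left) (rule tens_cong; simp add: pq)
    finally show ?thesis using tens_one[OF l0] by simp
  qed
  have QP: "Q * P = 1\<^sub>m (l*l)"
  proof -
    have "Q * P = tens l (1*1) (comp l qq pp) (comp l qq pp)" unfolding P_def Q_def tens_mult ..
    also have "\<dots> = tens l 1 dl dl" by (simp only: mult_1_left) (rule tens_cong; simp add: qp)
    finally show ?thesis using tens_one[OF l0] by simp
  qed
  have QLP: "Q * L * P = UU l" unfolding Q_def L_def P_def by (rule QLP[OF assms])
  have QLc: "Q * L \<in> carrier_mat (l*l) (l*l)" by (rule mult_carrier_mat[OF Qc Lc])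
  have "P * UU l * Q = P * (Q * L * P) * Q" unfolding QLP ..
  also have "\<dots> = (P * Q) * L * (P * Q)"
  proof -
    have "P * (Q * L * P) = (P * (Q * L)) * P" by (rule assoc_mult_mat[OF Pc QLc Pc, symmetric])
    also have "P * (Q * L) = (P * Q) * L" by (rule assoc_mult_mat[OF Pc Qc Lc, symmetric])
    finally have "P * (Q * L * P) * Q = (P * Q) * L * P * Q" by simp
    also have "\<dots> = ((P * Q) * L) * (P * Q)"
      by (rule assoc_mult_mat[OF mult_carrier_mat[OF mult_carrier_mat[OF Pc Qc] Lc] Pc Qc])
    finally show ?thesis .
  qed
  also have "\<dots> = L" unfolding PQ using Lc by simp
  finally have LPUQ: "L = P * UU l * Q" by simp
  have dimL: "dim_row L = l*l" using Lc by simp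
  have sim: "similar_mat L (UU l)"
    unfolding similar_mat_def similar_mat_wit_def Let_def dimL
    using Lc Uc Pc Qc PQ QP LPUQ by blast
  have "char_poly L = char_poly (UU l)" by (rule char_poly_similar[OF sim])
  also have "\<dots> = (\<Prod>a\<leftarrow>diag_mat (UU l). [:- a, 1:])"
    by (rule char_poly_upper_triangular[OF Uc UU_ut[OF l0]])
  also have "\<dots> = (\<Prod>i\<leftarrow>[0..<l*l]. [:- (UU l $$ (i,i)), 1:])"
    using Uc unfolding diag_mat_def by (simp add: o_def)
  also have "\<dots> = (\<Prod>i\<in>{0..<l*l}. [:- (UU l $$ (i,i)), 1:])"
    using prod.distinct_set_conv_list[of "[0..<l*l]" "\<lambda>i. [:- (UU l $$ (i,i)), 1:]"] by simp
  also have "\<dots> = (\<Prod>i<l*l. [:- ((if i div l = 0 then real l / 2 else 0) + (if i mod l = 0 then real l / 2 else 0)), 1:])"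
    unfolding atLeast0LessThan by (intro prod.cong refl) (simp add: UU_diag)
  also have "\<dots> = [:0, 1:] ^ (l^2 - 2*l + 1) * [:- (real l / 2), 1:] ^ (2 * (l - 1)) * [:- real l, 1:]"
    by (rule prod_final[OF assms])
  finally show ?thesis unfolding L_def .
qed

end
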